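(* Let $\mathbb{K}$ be a perfect field, $\mathbf{u}_1,\dots,\mathbf{u}_t\in\mathbb{K}^{\mathbb{N}^n}$ with $J=\mathrm{ann}(\mathbf{u}_1,\dots,\mathbf{u}_t)$ zero-dimensional, and $B$ an integer such that for every $j$ the minimal polynomial of $X_j$ in $\mathbb{K}[X_1,\dots,X_n]/J$ has degree at most $B$. Fix $j\in\{1,\dots,n\}$ and a sequence of monomials $\mathscr{B}'_{j+1}$ in $\mathbb{K}[X_{j+1},\dots,X_n]$ (with $\mathscr{B}'_{n+1}=(1)$ if $j=n$) of cardinality at most $D_{j+1}$. Let $\mathscr{C}_{j+1}=\{b'X_j^k : b'\in\mathscr{B}'_{j+1},\ 0\le k\le B-1\}$, and let $\mathsf{M}$ be the matrix with rows indexed by pairs $(i,b')$, $1\le i\le t$, $b'\in\mathscr{C}_{j+1}$, columns indexed by $b\in\mathscr{C}_{j+1}$ sorted increasingly for the lexicographic order $X_j>\cdots>X_n$, and entries $\langle\mathbf{u}_i\mid bb'\rangle$. Let $\mathscr{B}'_j=(b'_1<\cdots<b'_{D'_j})$ be the monomials indexing the pivot columns of the reduced row echelon form of $\mathsf{M}$. Then $D'_j\le D_j$; and if $j\le n-1$, $\mathscr{B}'_{j+1}=\mathscr{B}_{j+1}$ and $J_j\cap\mathbb{K}[X_{j+1},\dots,X_n]=J_{j+1}$, then $\mathscr{B}'_j=\mathscr{B}_j$.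
   Context: For $m\in\mathbb{N}^n$, $\mathbf{X}^m=X_1^{m_1}\cdots X_n^{m_n}$; for a sequence $\mathbf{u}=(u_m)_m$ and $f=\sum_mf_m\mathbf{X}^m$, $\langle\mathbf{u}\mid f\rangle=\sum_mf_mu_m$, $f\cdot\mathbf{u}=(\langle\mathbf{u}\mid\mathbf{X}^mf\rangle)_m$, $\mathrm{ann}(\mathbf{u})$ is the ideal of $f$ with $f\cdot\mathbf{u}=0$, and $\mathrm{ann}$ of several sequences is the intersection. $\pi_j(\mathbf{u}_i)$ is the sequence indexed by $\mathbb{N}^{n-j+1}$ with $\langle\pi_j(\mathbf{u}_i)\mid(m_j,\dots,m_n)\rangle=\langle\mathbf{u}_i\mid(0,\dots,0,m_j,\dots,m_n)\rangle$; $J_j=\mathrm{ann}(\pi_j(\mathbf{u}_1),\dots,\pi_j(\mathbf{u}_t))\subset\mathbb{K}[X_j,\dots,X_n]$, $D_j=\dim_{\mathbb{K}}\mathbb{K}[X_j,\dots,X_n]/J_j$, and $\mathscr{B}_j$ is the monomial basis (standard monomials) of $\mathbb{K}[X_j,\dots,X_n]/J_j$ for the lexicographic order $X_j>\cdots>X_n$. *)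

theory Defs
  imports "Jordan_Normal_Form.Gauss_Jordan_Elimination" "HOL-Computational_Algebra.Polynomial"
begin

(* Monomials X^m are exponent functions m :: nat => nat; variable X_i is index i.
   Polynomials are finitely supported coefficient functions on monomials;
   sequences are functions from monomials to the field. *)

type_synonym mono = "nat \<Rightarrow> nat"

definition perfect_field :: "'a::field itself \<Rightarrow> bool" where
  "perfect_field T \<longleftrightarrow> CHAR('a) = 0 \<or> (\<forall>y::'a. \<exists>x. x ^ CHAR('a) = y)"

definition monoms :: "nat set \<Rightarrow> mono set" where
  "monoms V = {m. \<forall>i. m i \<noteq> 0 \<longrightarrow> i \<in> V}"

definition polys :: "nat set \<Rightarrow> (mono \<Rightarrow> 'a::zero) set" where
  "polys V = {f. finite {m. f m \<noteq> 0} \<and> (\<forall>m. f m \<noteq> 0 \<longrightarrow> m \<in> monoms V)}"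

definition mmul :: "mono \<Rightarrow> mono \<Rightarrow> mono" where
  "mmul m m' = (\<lambda>i. m i + m' i)"

definition mtimes :: "mono \<Rightarrow> (mono \<Rightarrow> 'a::zero) \<Rightarrow> (mono \<Rightarrow> 'a)" where
  "mtimes m f = (\<lambda>k. if (\<forall>i. m i \<le> k i) then f (\<lambda>i. k i - m i) else 0)"

definition pair :: "(mono \<Rightarrow> 'a::comm_ring_1) \<Rightarrow> (mono \<Rightarrow> 'a) \<Rightarrow> 'a" where
  "pair u f = (\<Sum>m\<in>{m. f m \<noteq> 0}. f m * u m)"

definition act :: "nat set \<Rightarrow> (mono \<Rightarrow> 'a::comm_ring_1) \<Rightarrow> (mono \<Rightarrow> 'a) \<Rightarrow> (mono \<Rightarrow> 'a)" where
  "act V f u = (\<lambda>m. if m \<in> monoms V then pair u (mtimes m f) else 0)"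

definition ann :: "nat set \<Rightarrow> (mono \<Rightarrow> 'a::comm_ring_1) set \<Rightarrow> (mono \<Rightarrow> 'a) set" where
  "ann V S = {f \<in> polys V. \<forall>u\<in>S. act V f u = (\<lambda>_. 0)}"

definition proj :: "nat \<Rightarrow> nat \<Rightarrow> (mono \<Rightarrow> 'a) \<Rightarrow> (mono \<Rightarrow> 'a)" where
  "proj j n u = (\<lambda>m. u (\<lambda>i. if j \<le> i \<and> i \<le> n then m i else 0))"

definition Jj :: "nat \<Rightarrow> nat \<Rightarrow> (nat \<Rightarrow> mono \<Rightarrow> 'a::comm_ring_1) \<Rightarrow> nat \<Rightarrow> (mono \<Rightarrow> 'a) set" where
  "Jj n t u j = ann {j..n} ((\<lambda>i. proj j n (u i)) ` {1..t})"

definition lincomb :: "(mono \<Rightarrow> 'a::comm_ring_1) set \<Rightarrow> ((mono \<Rightarrow> 'a) \<Rightarrow> 'a) \<Rightarrow> (mono \<Rightarrow> 'a)" where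
  "lincomb S c = (\<lambda>m. \<Sum>s\<in>S. c s * s m)"

definition lin_indep_mod :: "(mono \<Rightarrow> 'a::comm_ring_1) set \<Rightarrow> (mono \<Rightarrow> 'a) set \<Rightarrow> bool" where
  "lin_indep_mod I S \<longleftrightarrow> (\<forall>c. lincomb S c \<in> I \<longrightarrow> (\<forall>s\<in>S. c s = 0))"

definition indep_cards :: "nat set \<Rightarrow> (mono \<Rightarrow> 'a::comm_ring_1) set \<Rightarrow> nat set" where
  "indep_cards V I = {card S | S. finite S \<and> S \<subseteq> polys V \<and> lin_indep_mod I S}"

definition quot_dim :: "nat set \<Rightarrow> (mono \<Rightarrow> 'a::comm_ring_1) set \<Rightarrow> nat" where
  "quot_dim V I = Sup (indep_cards V I)"

definition zero_dimensional :: "nat set \<Rightarrow> (mono \<Rightarrow> 'a::comm_ring_1) set \<Rightarrow> bool" where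
  "zero_dimensional V I \<longleftrightarrow> bdd_above (indep_cards V I)"

(* lexicographic order with X_1 > X_2 > ... (smaller index = bigger variable) *)
definition lex_less :: "mono \<Rightarrow> mono \<Rightarrow> bool" where
  "lex_less m m' \<longleftrightarrow> (\<exists>k. (\<forall>i<k. m i = m' i) \<and> m k < m' k)"

definition is_lm :: "(mono \<Rightarrow> 'a::zero) \<Rightarrow> mono \<Rightarrow> bool" where
  "is_lm f m \<longleftrightarrow> f m \<noteq> 0 \<and> (\<forall>m'. f m' \<noteq> 0 \<and> m' \<noteq> m \<longrightarrow> lex_less m' m)"

definition std_monos :: "nat set \<Rightarrow> (mono \<Rightarrow> 'a::zero) set \<Rightarrow> mono set" where
  "std_monos V I = {m \<in> monoms V. \<not> (\<exists>f\<in>I. is_lm f m)}"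

definition var_mono :: "nat \<Rightarrow> nat \<Rightarrow> mono" where
  "var_mono j k = (\<lambda>i. if i = j then k else 0)"

definition poly_in_var :: "nat \<Rightarrow> 'a::zero poly \<Rightarrow> (mono \<Rightarrow> 'a)" where
  "poly_in_var j p = (\<lambda>m. if m = var_mono j (m j) then coeff p (m j) else 0)"

definition is_min_poly :: "(mono \<Rightarrow> 'a::field) set \<Rightarrow> nat \<Rightarrow> 'a poly \<Rightarrow> bool" where
  "is_min_poly I j p \<longleftrightarrow> lead_coeff p = 1 \<and> poly_in_var j p \<in> I \<and>
     (\<forall>q. poly_in_var j q \<in> I \<longrightarrow> p dvd q)"

definition Cset :: "nat \<Rightarrow> nat \<Rightarrow> mono set \<Rightarrow> mono set" where
  "Cset j B Bp = {mmul b' (var_mono j k) | b' k. b' \<in> Bp \<and> k < B}"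

definition sorted_lex :: "mono set \<Rightarrow> mono list" where
  "sorted_lex C = (THE xs. sorted_wrt lex_less xs \<and> set xs = C)"

(* some enumeration of the row indices (the pivot columns do not depend on the row order) *)
definition row_list :: "nat \<Rightarrow> mono set \<Rightarrow> (nat \<times> mono) list" where
  "row_list t C = (SOME xs. distinct xs \<and> set xs = {1..t} \<times> C)"

definition Mmat :: "nat \<Rightarrow> (nat \<Rightarrow> mono \<Rightarrow> 'a) \<Rightarrow> mono set \<Rightarrow> 'a mat" where
  "Mmat t u C = (let rs = row_list t C; cs = sorted_lex C in
     mat (length rs) (length cs) (\<lambda>(r, c). case rs ! r of (i, b') \<Rightarrow> u i (mmul (cs ! c) b')))"

definition pivot_cols :: "'a::zero mat \<Rightarrow> nat set" where
  "pivot_cols R = {c. c < dim_col R \<and> (\<exists>r < dim_row R. R $$ (r, c) \<noteq> 0 \<and> (\<forall>c' < c. R $$ (r, c') = 0))}"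

definition Bprime :: "nat \<Rightarrow> nat \<Rightarrow> nat \<Rightarrow> (nat \<Rightarrow> mono \<Rightarrow> 'a::field) \<Rightarrow> mono set \<Rightarrow> mono set" where
  "Bprime t B j u Bp = (let C = Cset j B Bp in
     (\<lambda>c. sorted_lex C ! c) ` pivot_cols (gauss_jordan_single (Mmat t u C)))"

end

theory Submission
  imports Defs "HOL-Library.Function_Algebras"
begin


lemma lex_irrefl: "\<not> lex_less m m"
  unfolding lex_less_def by auto

lemma lex_trans: "lex_less a b \<Longrightarrow> lex_less b c \<Longrightarrow> lex_less a c"
  unfolding lex_less_def
proof (elim exE conjE)
  fix k1 k2 assume h1: "\<forall>i<k1. a i = b i" "a k1 < b k1" and h2: "\<forall>i<k2. b i = c i" "b k2 < c k2"
  show "\<exists>k. (\<forall>i<k. a i = c i) \<and> a k < c k"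
  proof (cases "k1 < k2")
    case True thus ?thesis using h1 h2 by (intro exI[of _ k1]) auto
  next
    case False
    show ?thesis
    proof (cases "k1 = k2")
      case True thus ?thesis using h1 h2 by (intro exI[of _ k1]) auto
    next
      case False
      with \<open>\<not> k1 < k2\<close> have "k2 < k1" by auto
      thus ?thesis using h1 h2 by (intro exI[of _ k2]) auto
    qed
  qed
qed

lemma lex_asym: "lex_less a b \<Longrightarrow> \<not> lex_less b a"
  using lex_trans lex_irrefl by blast

lemma lex_total: "m \<noteq> m' \<Longrightarrow> lex_less m m' \<or> lex_less m' m"
proof -
  assume "m \<noteq> m'"
  then have ex: "\<exists>i. m i \<noteq> m' i" by auto
  define k where "k = (LEAST i. m i \<noteq> m' i)"
  have k1: "m k \<noteq> m' k" unfolding k_def using LeastI_ex[OF ex] .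
  have k2: "\<forall>i<k. m i = m' i" unfolding k_def using not_less_Least by blast
  show ?thesis
  proof (cases "m k < m' k")
    case True thus ?thesis using k2 unfolding lex_less_def by blast
  next
    case False
    hence "m' k < m k" using k1 by auto
    thus ?thesis using k2 unfolding lex_less_def by (intro disjI2 exI[of _ k]) auto
  qed
qed

lemma lex_mmul: "lex_less a b \<Longrightarrow> lex_less (mmul m a) (mmul m b)"
proof -
  assume "lex_less a b"
  then obtain k where "\<forall>i<k. a i = b i" "a k < b k" unfolding lex_less_def by blast
  then show ?thesis unfolding lex_less_def mmul_def by (intro exI[of _ k]) simp
qed

lemma mmul_comm: "mmul a b = mmul b a"
  unfolding mmul_def by (auto simp: add.commute)

lemma mmul_assoc: "mmul (mmul a b) c = mmul a (mmul b c)"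
  unfolding mmul_def by (auto simp: add.assoc)

lemma mmul_inj: "inj (mmul m)"
  unfolding mmul_def inj_def by (simp add: fun_eq_iff)

lemma mmul_monoms: "a \<in> monoms V \<Longrightarrow> b \<in> monoms V \<Longrightarrow> mmul a b \<in> monoms V"
  unfolding mmul_def monoms_def by auto

definition mlist :: "nat \<Rightarrow> mono \<Rightarrow> nat list" where
  "mlist N m = map m [0..<N]"

lemma lex_mlist:
  assumes "lex_less a b" "\<forall>i. b i \<noteq> 0 \<longrightarrow> i < N"
  shows "(mlist N a, mlist N b) \<in> lex {(x,y). x < y}"
proof -
  obtain k where k: "\<forall>i<k. a i = b i" "a k < b k" using assms(1) unfolding lex_less_def by auto
  have kN: "k < N" using assms(2) k(2) by (metis less_nat_zero_code)
  have split: "[0..<N] = [0..<k] @ k # [Suc k..<N]"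
  proof -
    have "[0..<N] = [0..<k] @ [k..<k+(N-k)]" using kN upt_add_eq_append[of 0 k "N-k"] by simp
    also have "[k..<k+(N-k)] = k # [Suc k..<N]" using kN upt_conv_Cons[of k N] by simp
    finally show ?thesis .
  qed
  have e: "map b [0..<k] = map a [0..<k]" using k(1) by auto
  have ma: "mlist N a = map a [0..<k] @ a k # map a [Suc k..<N]" unfolding mlist_def split by simp
  have mb: "mlist N b = map a [0..<k] @ b k # map b [Suc k..<N]" unfolding mlist_def split e[symmetric] by simp
  show ?thesis unfolding lex_conv ma mb using k(2)
    by (intro CollectI case_prodI conjI exI[of _ "map a [0..<k]"] exI[of _ "a k"] exI[of _ "b k"]
        exI[of _ "map a [Suc k..<N]"] exI[of _ "map b [Suc k..<N]"]) auto
qed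

lemma wf_lex_mon: "wf {(a,b). lex_less a b \<and> b \<in> monoms {..N}}"
proof -
  have "wf (inv_image (lex {(x::nat,y). x < y}) (mlist (Suc N)))"
    by (intro wf_inv_image wf_lex) (simp add: wf_less)
  moreover have "{(a,b). lex_less a b \<and> b \<in> monoms {..N}} \<subseteq> inv_image (lex {(x::nat,y). x < y}) (mlist (Suc N))"
    by (auto simp: monoms_def less_Suc_eq_le intro!: lex_mlist)
  ultimately show ?thesis by (rule wf_subset)
qed


abbreviation supp :: "(mono \<Rightarrow> 'a::zero) \<Rightarrow> mono set" where
  "supp f \<equiv> {k. f k \<noteq> 0}"

lemma mtimes_mmul: "mtimes m f (mmul m k) = f k"
  unfolding mtimes_def mmul_def by simp

lemma supp_mtimes: "supp (mtimes m f) = mmul m ` supp f"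
proof (intro equalityI subsetI)
  fix k assume "k \<in> supp (mtimes m f)"
  then have h: "\<forall>i. m i \<le> k i" "f (\<lambda>i. k i - m i) \<noteq> 0" unfolding mtimes_def by (auto split: if_splits)
  have "k = mmul m (\<lambda>i. k i - m i)" using h(1) unfolding mmul_def by (auto simp: fun_eq_iff)
  then show "k \<in> mmul m ` supp f" using h(2) by blast
next
  fix k assume "k \<in> mmul m ` supp f"
  then show "k \<in> supp (mtimes m f)" by (auto simp: mtimes_mmul)
qed

lemma pair_mtimes: "pair U (mtimes m f) = (\<Sum>k\<in>supp f. f k * U (mmul m k))"
  unfolding pair_def supp_mtimes
  by (subst sum.reindex) (auto intro: inj_on_subset[OF mmul_inj] simp: mtimes_mmul)

lemma act_zero_iff: "act V f U = (\<lambda>_. 0) \<longleftrightarrow> (\<forall>m\<in>monoms V. (\<Sum>k\<in>supp f. f k * U (mmul m k)) = 0)"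
  unfolding act_def fun_eq_iff pair_mtimes by auto

lemma mtimes_mtimes: "mtimes m' (mtimes m f) = mtimes (mmul m' m) f"
proof (rule ext)
  fix k
  show "mtimes m' (mtimes m f) k = mtimes (mmul m' m) f k"
  proof (cases "\<forall>i. m' i + m i \<le> k i")
    case True
    then have "\<forall>i. m' i \<le> k i" "\<forall>i. m i \<le> k i - m' i" by (metis add_leD1, metis add.commute le_diff_conv2 add_leD1)
    moreover have "(\<lambda>i. k i - m' i - m i) = (\<lambda>i. k i - (m' i + m i))" by auto
    ultimately show ?thesis using True unfolding mtimes_def mmul_def by simp
  next
    case False
    then have "\<not> ((\<forall>i. m' i \<le> k i) \<and> (\<forall>i. m i \<le> k i - m' i))" by (auto simp: le_diff_conv2) (metis add.commute le_diff_conv2)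
    then show ?thesis using False unfolding mtimes_def mmul_def by auto
  qed
qed

lemma polys_mtimes: "f \<in> polys V \<Longrightarrow> m \<in> monoms V \<Longrightarrow> mtimes m f \<in> polys V"
proof -
  assume f: "f \<in> polys V" and m: "m \<in> monoms V"
  have "finite (supp (mtimes m f))" using f unfolding polys_def supp_mtimes by auto
  moreover have "k \<in> monoms V" if "mtimes m f k \<noteq> 0" for k
  proof -
    have "k \<in> mmul m ` supp f" using that supp_mtimes[of m f] by blast
    then obtain k0 where "k = mmul m k0" "f k0 \<noteq> 0" by blast
    then show ?thesis using f m mmul_monoms[of m V] unfolding polys_def by blast
  qed
  ultimately show ?thesis unfolding polys_def by blast
qed

lemma ann_mtimes: assumes "f \<in> ann V S" "m \<in> monoms V" shows "mtimes m f \<in> ann V S"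
proof -
  have p: "mtimes m f \<in> polys V" using assms polys_mtimes unfolding ann_def by blast
  have "act V (mtimes m f) U = (\<lambda>_. 0)" if U: "U \<in> S" for U
  proof (rule ext)
    fix m'
    have a: "act V f U = (\<lambda>_. 0)" using assms(1) U unfolding ann_def by blast
    show "act V (mtimes m f) U m' = 0"
    proof (cases "m' \<in> monoms V")
      case True
      then have "mmul m' m \<in> monoms V" using mmul_monoms assms(2) by blast
      then have "pair U (mtimes (mmul m' m) f) = 0" using fun_cong[OF a, of "mmul m' m"] unfolding act_def by simp
      then show ?thesis using True unfolding act_def mtimes_mtimes by simp
    qed (simp add: act_def)
  qed
  then show ?thesis using p unfolding ann_def by blast
qed

lemma is_lm_mtimes: assumes "is_lm f a" shows "is_lm (mtimes m f) (mmul m a)"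
  unfolding is_lm_def
proof (intro conjI allI impI)
  show "mtimes m f (mmul m a) \<noteq> 0" using assms unfolding is_lm_def by (simp add: mtimes_mmul)
  fix m'' assume h: "mtimes m f m'' \<noteq> 0 \<and> m'' \<noteq> mmul m a"
  then obtain k where k: "m'' = mmul m k" "f k \<noteq> 0" using supp_mtimes[of m f] by blast
  then have "k \<noteq> a" using h by auto
  then have "lex_less k a" using assms k unfolding is_lm_def by blast
  then show "lex_less m'' (mmul m a)" using k lex_mmul by blast
qed

lemma proj_W: "x \<in> monoms {j..n} \<Longrightarrow> proj j n U x = U x"
  unfolding proj_def monoms_def
  by (rule arg_cong[where f=U]) (auto simp: fun_eq_iff)

lemma polys_supp: "g \<in> polys V \<Longrightarrow> k \<in> supp g \<Longrightarrow> k \<in> monoms V"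
  unfolding polys_def by auto

lemma Jj_iff:
  assumes g: "g \<in> polys {j..n}"
  shows "g \<in> Jj n t u j \<longleftrightarrow> (\<forall>i\<in>{1..t}. \<forall>m\<in>monoms {j..n}. (\<Sum>k\<in>supp g. g k * u i (mmul m k)) = 0)"
proof -
  have e: "(\<Sum>k\<in>supp g. g k * proj j n (u i) (mmul m k)) = (\<Sum>k\<in>supp g. g k * u i (mmul m k))"
    if "m \<in> monoms {j..n}" for i m
    by (rule sum.cong[OF refl]) (use that g polys_supp mmul_monoms proj_W in metis)
  show ?thesis unfolding Jj_def ann_def using g
    by (auto simp: act_zero_iff e)
qed

lemma monoms_mono: "V \<subseteq> V' \<Longrightarrow> monoms V \<subseteq> monoms V'"
  unfolding monoms_def by auto

lemma polys_mono: "V \<subseteq> V' \<Longrightarrow> polys V \<subseteq> polys V'"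
  unfolding polys_def using monoms_mono by blast

lemma J_sub_Jj:
  assumes j: "j \<in> {1..n}" and f: "f \<in> ann {1..n} (u ` {1..t})" "f \<in> polys {j..n}"
  shows "f \<in> Jj n t u j"
proof -
  have W: "monoms {j..n} \<subseteq> monoms {1..n}" using j by (intro monoms_mono) auto
  have "\<forall>i\<in>{1..t}. \<forall>m\<in>monoms {1..n}. (\<Sum>k\<in>supp f. f k * u i (mmul m k)) = 0"
    using f(1) unfolding ann_def act_zero_iff by auto
  then show ?thesis using Jj_iff[OF f(2)] W by blast
qed


lemma mult_mat_vec_row:
  assumes "A \<in> carrier_mat nr nc" "x \<in> carrier_vec nc" "r < nr"
  shows "(A *\<^sub>v x) $ r = (\<Sum>k\<in>{0..<nc}. A $$ (r,k) * x $ k)"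
  using assms by (auto simp: scalar_prod_def intro!: sum.cong)

lemma sum_split_at:
  fixes w :: "nat \<Rightarrow> 'a::comm_ring_1"
  assumes "c < nc" "x c = 1" "\<And>k. c < k \<Longrightarrow> k < nc \<Longrightarrow> x k = 0"
  shows "(\<Sum>k\<in>{0..<nc}. w k * x k) = w c + (\<Sum>k\<in>{0..<c}. w k * x k)"
proof -
  have "(\<Sum>k\<in>{0..<nc}. w k * x k) = (\<Sum>k\<in>{0..<Suc c}. w k * x k) + (\<Sum>k\<in>{Suc c..<nc}. w k * x k)"
    using assms(1) by (intro sum.atLeastLessThan_concat[symmetric]) auto
  also have "(\<Sum>k\<in>{Suc c..<nc}. w k * x k) = 0" using assms(3) by (intro sum.neutral) auto
  also have "(\<Sum>k\<in>{0..<Suc c}. w k * x k) = (\<Sum>k\<in>{0..<c}. w k * x k) + w c * x c" by simp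
  finally show ?thesis using assms(2) by simp
qed

definition dep :: "'a::field mat \<Rightarrow> nat \<Rightarrow> bool" where
  "dep A c \<longleftrightarrow> (\<exists>x\<in>carrier_vec (dim_col A). A *\<^sub>v x = 0\<^sub>v (dim_row A) \<and> x $ c = 1 \<and>
      (\<forall>k. c < k \<and> k < dim_col A \<longrightarrow> x $ k = 0))"

lemma pivot_cols_fun:
  fixes G :: "'a::field mat"
  assumes G: "G \<in> carrier_mat nr nc" and p: "pivot_fun G f nc"
  shows "pivot_cols G = {c. c < nc \<and> (\<exists>r<nr. f r = c)}"
proof (intro equalityI subsetI)
  note pD = pivot_funD[OF carrier_matD(1)[OF G] p]
  fix c assume "c \<in> pivot_cols G"
  then obtain r where r: "c < nc" "r < nr" "G $$ (r,c) \<noteq> 0" "\<forall>c'<c. G $$ (r,c') = 0"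
    unfolding pivot_cols_def using G by auto
  have "\<not> c < f r" using pD(2)[OF r(2)] r(3) by auto
  moreover have "\<not> f r < c"
  proof
    assume "f r < c"
    then have "G $$ (r, f r) = 1" using pD(4)[OF r(2)] r(1) by auto
    moreover have "G $$ (r, f r) = 0" using r(4) \<open>f r < c\<close> by blast
    ultimately show False by simp
  qed
  ultimately show "c \<in> {c. c < nc \<and> (\<exists>r<nr. f r = c)}" using r by auto
next
  note pD = pivot_funD[OF carrier_matD(1)[OF G] p]
  fix c assume "c \<in> {c. c < nc \<and> (\<exists>r<nr. f r = c)}"
  then obtain r where r: "c < nc" "r < nr" "f r = c" by auto
  then show "c \<in> pivot_cols G" unfolding pivot_cols_def using G pD(2)[OF r(2)] pD(4)[OF r(2)] by auto
qed

lemma pivot_char: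
  fixes A :: "'a::field mat"
  assumes A: "A \<in> carrier_mat nr nc" and c: "c < nc"
  shows "c \<in> pivot_cols (gauss_jordan_single A) \<longleftrightarrow> \<not> dep A c"
proof -
  define G where "G = gauss_jordan_single A"
  note gj = gauss_jordan_single[OF A G_def[symmetric]]
  obtain f where p: "pivot_fun G f nc" using gj(3) gj(2) unfolding row_echelon_form_def by auto
  note pD = pivot_funD[OF carrier_matD(1)[OF gj(2)] p]
  have ker: "x \<in> carrier_vec nc \<Longrightarrow> A *\<^sub>v x = 0\<^sub>v nr \<longleftrightarrow> G *\<^sub>v x = 0\<^sub>v nr" for x using gj(1) by blast
  have depG: "dep A c \<longleftrightarrow> (\<exists>x\<in>carrier_vec nc. G *\<^sub>v x = 0\<^sub>v nr \<and> x $ c = 1 \<and> (\<forall>k. c < k \<and> k < nc \<longrightarrow> x $ k = 0))"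
    unfolding dep_def using A ker by auto
  show ?thesis unfolding G_def[symmetric]
  proof
    assume "c \<in> pivot_cols G"
    then obtain r where r: "r < nr" "f r = c" using pivot_cols_fun[OF gj(2) p] by auto
    show "\<not> dep A c"
    proof
      assume "dep A c"
      then obtain x where x: "x \<in> carrier_vec nc" "G *\<^sub>v x = 0\<^sub>v nr" "x $ c = 1" "\<forall>k. c < k \<and> k < nc \<longrightarrow> x $ k = 0"
        using depG by auto
      have "(G *\<^sub>v x) $ r = (\<Sum>k\<in>{0..<nc}. G $$ (r,k) * x $ k)" using mult_mat_vec_row[OF gj(2) x(1) r(1)] .
      also have "\<dots> = G $$ (r,c) + (\<Sum>k\<in>{0..<c}. G $$ (r,k) * x $ k)"
        by (rule sum_split_at[OF c]) (use x in auto)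
      also have "(\<Sum>k\<in>{0..<c}. G $$ (r,k) * x $ k) = 0" using pD(2)[OF r(1)] r(2) by (intro sum.neutral) auto
      also have "G $$ (r,c) = 1" using pD(4)[OF r(1)] r(2) c by auto
      finally have "(G *\<^sub>v x) $ r = 1" by simp
      then show False using x(2) r(1) by simp
    qed
  next
    assume nd: "\<not> dep A c"
    show "c \<in> pivot_cols G"
    proof (rule ccontr)
    assume np: "\<not> c \<in> pivot_cols G"
    then have nf: "\<forall>r<nr. f r \<noteq> c" using pivot_cols_fun[OF gj(2) p] c by auto
    define y where "y k = - (\<Sum>r'\<in>{r'. r' < nr \<and> f r' = k}. G $$ (r', c))" for k
    define x where "x = vec nc (\<lambda>k. (if k = c then 1 else 0) + (if k < c then y k else 0))"
    have xc: "x \<in> carrier_vec nc" unfolding x_def by simp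
    have row0: "(\<Sum>k\<in>{0..<nc}. G $$ (r,k) * x $ k) = 0" if r: "r < nr" for r
    proof -
      have "(\<Sum>k\<in>{0..<nc}. G $$ (r,k) * x $ k) =
           (\<Sum>k\<in>{0..<nc}. G $$ (r,k) * (if k = c then 1 else 0)) + (\<Sum>k\<in>{0..<nc}. G $$ (r,k) * (if k < c then y k else 0))"
        unfolding x_def by (simp add: distrib_left sum.distrib)
      also have "(\<Sum>k\<in>{0..<nc}. G $$ (r,k) * (if k = c then 1 else 0)) = G $$ (r,c)"
        using c by (simp add: sum.delta' if_distrib cong: if_cong)
      also have "(\<Sum>k\<in>{0..<nc}. G $$ (r,k) * (if k < c then y k else 0)) = (\<Sum>k\<in>{0..<c}. G $$ (r,k) * y k)"
      proof -
        have "(\<Sum>k\<in>{0..<nc}. G $$ (r,k) * (if k < c then y k else 0)) = (\<Sum>k\<in>{0..<nc}. if k < c then G $$ (r,k) * y k else 0)"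
          by (intro sum.cong) auto
        also have "\<dots> = (\<Sum>k\<in>{0..<nc} \<inter> {k. k < c}. G $$ (r,k) * y k)" by (simp add: sum.inter_restrict)
        also have "{0..<nc} \<inter> {k. k < c} = {0..<c}" using c by auto
        finally show ?thesis .
      qed
      finally have eq: "(\<Sum>k\<in>{0..<nc}. G $$ (r,k) * x $ k) = G $$ (r,c) + (\<Sum>k\<in>{0..<c}. G $$ (r,k) * y k)" .
      show ?thesis
      proof (cases "f r < nc")
        case False
        then have "f r = nc" using pD(1)[OF r] by auto
        then have z: "\<forall>k<nc. G $$ (r,k) = 0" using pD(2)[OF r] by auto
        then show ?thesis by (intro sum.neutral) auto
      next
        case True
        show ?thesis
        proof (cases "c < f r")
          case True
          then show ?thesis unfolding eq using pD(2)[OF r] by auto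
        next
          case False
          then have frc: "f r < c" using nf r by (meson linorder_neqE_nat)
          have inner: "G $$ (r,k) * y k = - (if k = f r then G $$ (r,c) else 0)" if k: "k < c" for k
          proof -
            have "G $$ (r,k) * y k = - (\<Sum>r'\<in>{r'. r' < nr \<and> f r' = k}. G $$ (r,k) * G $$ (r', c))"
              unfolding y_def by (simp add: sum_distrib_left)
            also have "(\<Sum>r'\<in>{r'. r' < nr \<and> f r' = k}. G $$ (r,k) * G $$ (r', c)) =
                (\<Sum>r'\<in>{r'. r' < nr \<and> f r' = k}. if r' = r then G $$ (r,c) else 0)"
            proof (intro sum.cong refl)
              fix r' assume r': "r' \<in> {r'. r' < nr \<and> f r' = k}"
              show "G $$ (r,k) * G $$ (r', c) = (if r' = r then G $$ (r,c) else 0)"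
              proof (cases "r' = r")
                case True then show ?thesis using pD(4)[OF r] r' frc c by auto
              next
                case False
                then have "G $$ (r, f r') = 0" using pD(5)[of r' r] r' r k c by auto
                then show ?thesis using False r' by auto
              qed
            qed
            also have "\<dots> = (if k = f r then G $$ (r,c) else 0)"
              using r by (subst sum.delta) auto
            finally show ?thesis .
          qed
          have "(\<Sum>k\<in>{0..<c}. G $$ (r,k) * y k) = (\<Sum>k\<in>{0..<c}. - (if k = f r then G $$ (r,c) else 0))"
            using inner by (intro sum.cong) auto
          also have "\<dots> = - G $$ (r,c)" using frc by (simp add: sum_negf sum.delta)
          finally show ?thesis unfolding eq by simp
        qed
      qed
    qed
    have "G *\<^sub>v x = 0\<^sub>v nr"
      using row0 mult_mat_vec_row[OF gj(2) xc] gj(2) by (intro eq_vecI) auto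
    moreover have "x $ c = 1" unfolding x_def using c by simp
    moreover have "\<forall>k. c < k \<and> k < nc \<longrightarrow> x $ k = 0" unfolding x_def by auto
    ultimately have "dep A c" using depG xc by blast
    with nd show False by blast
    qed
  qed
qed


definition scl :: "'a::comm_ring_1 \<Rightarrow> ('b \<Rightarrow> 'a) \<Rightarrow> ('b \<Rightarrow> 'a)" where
  "scl c f = (\<lambda>x. c * f x)"

interpretation fm: Modules.module "scl :: 'a::comm_ring_1 \<Rightarrow> ('b \<Rightarrow> 'a) \<Rightarrow> ('b \<Rightarrow> 'a)"
  by unfold_locales (simp_all add: scl_def fun_eq_iff algebra_simps)

lemma sum_fun_apply: "(\<Sum>a\<in>A. f a) x = (\<Sum>a\<in>A. f a x)"
  by (induct A rule: infinite_finite_induct) auto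

lemma span_from_coeffs: "(\<Sum>m\<in>A. scl (e m) (X m)) \<in> fm.span (X ` A)"
  by (intro fm.span_sum fm.span_scale fm.span_base) auto

lemma span_coeffs:
  assumes A: "finite A" and v: "v \<in> fm.span (X ` A)"
  shows "\<exists>e. v = (\<Sum>m\<in>A. scl (e m) (X m))"
  using v
proof (induction rule: fm.span_induct_alt)
  case base
  show ?case by (intro exI[of _ "\<lambda>_. 0"]) (simp add: scl_def fun_eq_iff sum_fun_apply)
next
  case (step c x y)
  then obtain m0 e where m0: "m0 \<in> A" "x = X m0" and e: "y = (\<Sum>m\<in>A. scl (e m) (X m))" by auto
  show ?case
  proof (intro exI[of _ "\<lambda>m. e m + (if m = m0 then c else 0)"])
    show "scl c x + y = (\<Sum>m\<in>A. scl (e m + (if m = m0 then c else 0)) (X m))"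
      unfolding e m0 using A m0(1)
      by (simp add: scl_def fun_eq_iff sum_fun_apply distrib_right sum.distrib if_distrib[of "\<lambda>z. z * _"] sum.delta cong: if_cong)
  qed
qed

lemma dep_span:
  fixes a :: "'c \<Rightarrow> 'a::field"
  assumes K: "finite K" "m \<in> K" "a m \<noteq> 0" and z: "(\<Sum>k\<in>K. scl (a k) (X k)) = 0"
  shows "X m \<in> fm.span (X ` (K - {m}))"
proof -
  define S where "S = (\<Sum>k\<in>K - {m}. scl (a k) (X k))"
  have "(\<Sum>k\<in>K. scl (a k) (X k)) = scl (a m) (X m) + S"
    unfolding S_def using sum.remove[OF K(1,2)] .
  then have "scl (a m) (X m) + S = 0" using z by simp
  then have e: "scl (a m) (X m) = - S" by (simp add: eq_neg_iff_add_eq_0)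
  have "X m = scl (inverse (a m)) (scl (a m) (X m))" using K(3) by (simp add: scl_def fun_eq_iff)
  also have "\<dots> = scl (- inverse (a m)) S"
    unfolding e by (simp add: scl_def fun_eq_iff)
  finally have xm: "X m = scl (- inverse (a m)) S" .
  have "S \<in> fm.span (X ` (K - {m}))" unfolding S_def by (rule span_from_coeffs)
  then show ?thesis unfolding xm by (rule fm.span_scale)
qed

lemma sorted_exists: "finite C \<Longrightarrow> \<exists>xs. sorted_wrt lex_less xs \<and> set xs = C"
proof (induction rule: finite_induct)
  case empty then show ?case by auto
next
  case (insert x F)
  then obtain xs where xs: "sorted_wrt lex_less xs" "set xs = F" by auto
  define ys where "ys = filter (\<lambda>y. lex_less y x) xs @ [x] @ filter (\<lambda>y. lex_less x y) xs"
  have t: "lex_less a b" if "lex_less a x" "lex_less x b" for a b using lex_trans that by blast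
  have "sorted_wrt lex_less ys" unfolding ys_def using xs(1)
    by (simp add: sorted_wrt_append sorted_wrt_filter t)
  moreover have "set ys = insert x F"
  proof -
    have "y \<in> set ys" if "y \<in> F" for y
    proof -
      have "y \<noteq> x" using that insert(2) by auto
      then have "lex_less y x \<or> lex_less x y" by (rule lex_total)
      then show ?thesis unfolding ys_def using xs(2) that by auto
    qed
    moreover have "set ys \<subseteq> insert x F" unfolding ys_def using xs(2) by auto
    moreover have "x \<in> set ys" unfolding ys_def by simp
    ultimately show ?thesis by blast
  qed
  ultimately show ?case by blast
qed

lemma sorted_unique: "sorted_wrt lex_less xs \<Longrightarrow> sorted_wrt lex_less ys \<Longrightarrow> set xs = set ys \<Longrightarrow> xs = ys"
proof (induction xs arbitrary: ys)
  case Nil then show ?case by auto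
next
  case (Cons x xs)
  then obtain y ys' where ys: "ys = y # ys'" by (cases ys) auto
  have "x = y"
  proof (rule ccontr)
    assume ne: "x \<noteq> y"
    have "x \<in> set ys'" using Cons.prems(3) ys ne by auto
    then have "lex_less y x" using Cons.prems(2) ys by auto
    moreover have "y \<in> set xs" using Cons.prems(3) ys ne by auto
    then have "lex_less x y" using Cons.prems(1) by auto
    ultimately show False using lex_asym by blast
  qed
  moreover have "x \<notin> set xs" using Cons.prems(1) lex_irrefl by auto
  moreover have "y \<notin> set ys'" using Cons.prems(2) ys lex_irrefl by auto
  ultimately have "set xs = set ys'" using Cons.prems(3) ys by auto
  then have "xs = ys'" using Cons ys by auto
  then show ?case using ys \<open>x = y\<close> by simp
qed

lemma sorted_lex:
  assumes "finite C"
  shows "sorted_wrt lex_less (sorted_lex C)" "set (sorted_lex C) = C"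
proof -
  obtain xs where xs: "sorted_wrt lex_less xs" "set xs = C" using sorted_exists[OF assms] by auto
  have "sorted_wrt lex_less (sorted_lex C) \<and> set (sorted_lex C) = C"
    unfolding sorted_lex_def by (rule theI[of _ xs]) (use xs sorted_unique in auto)
  then show "sorted_wrt lex_less (sorted_lex C)" "set (sorted_lex C) = C" by auto
qed

lemma sorted_lex_nth:
  assumes "finite C" "i < length (sorted_lex C)" "k < length (sorted_lex C)"
  shows "lex_less (sorted_lex C ! i) (sorted_lex C ! k) \<longleftrightarrow> i < k"
proof -
  have s: "\<forall>i k. i < k \<and> k < length (sorted_lex C) \<longrightarrow> lex_less (sorted_lex C ! i) (sorted_lex C ! k)"
    using sorted_lex(1)[OF assms(1)] unfolding sorted_wrt_iff_nth_less by blast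
  show ?thesis
  proof
    assume l: "lex_less (sorted_lex C ! i) (sorted_lex C ! k)"
    show "i < k"
    proof (rule ccontr)
      assume "\<not> i < k"
      then have "k < i \<or> k = i" by auto
      then show False
      proof
        assume "k < i"
        then have "lex_less (sorted_lex C ! k) (sorted_lex C ! i)" using s assms by blast
        then show False using l lex_asym by blast
      next
        assume "k = i" then show False using l lex_irrefl by simp
      qed
    qed
  qed (use s assms in blast)
qed

lemma sorted_lex_distinct: assumes "finite C" shows "distinct (sorted_lex C)"
  unfolding distinct_conv_nth
proof (intro allI impI)
  fix i k assume h: "i < length (sorted_lex C)" "k < length (sorted_lex C)" "i \<noteq> k"
  show "sorted_lex C ! i \<noteq> sorted_lex C ! k"
  proof (cases "i < k")
    case True then show ?thesis using sorted_lex_nth[OF assms h(1,2)] lex_irrefl by force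
  next
    case False then have "k < i" using h(3) by auto
    then show ?thesis using sorted_lex_nth[OF assms h(2,1)] lex_irrefl by force
  qed
qed

lemma row_list: assumes "finite C" shows "distinct (row_list t C)" "set (row_list t C) = {1..t} \<times> C"
proof -
  have "\<exists>xs. distinct xs \<and> set xs = {1..t} \<times> C" 
  proof -
    have "finite ({1..t} \<times> C)" using assms by simp
    then obtain xs where "set xs = {1..t} \<times> C" "distinct xs" using finite_distinct_list by blast
    then show ?thesis by blast
  qed
  then have "distinct (row_list t C) \<and> set (row_list t C) = {1..t} \<times> C" unfolding row_list_def by (rule someI_ex)
  then show "distinct (row_list t C)" "set (row_list t C) = {1..t} \<times> C" by auto
qed


definition VR :: "nat \<Rightarrow> (nat \<Rightarrow> mono \<Rightarrow> 'a::comm_ring_1) \<Rightarrow> mono set \<Rightarrow> mono \<Rightarrow> (nat \<times> mono \<Rightarrow> 'a)" where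
  "VR t u C m = (\<lambda>(i,b'). if i \<in> {1..t} \<and> b' \<in> C then u i (mmul m b') else 0)"

lemma Mmat_carrier: "Mmat t u C \<in> carrier_mat (length (row_list t C)) (length (sorted_lex C))"
  unfolding Mmat_def Let_def by simp

lemma Mmat_entry: "r < length (row_list t C) \<Longrightarrow> k < length (sorted_lex C) \<Longrightarrow>
   Mmat t u C $$ (r,k) = u (fst (row_list t C ! r)) (mmul (sorted_lex C ! k) (snd (row_list t C ! r)))"
  unfolding Mmat_def Let_def by (simp split: prod.splits)

lemma lower_set:
  assumes C: "finite C" and c: "c < length (sorted_lex C)"
  shows "{m \<in> C. lex_less m (sorted_lex C ! c)} = (\<lambda>k. sorted_lex C ! k) ` {0..<c}"
proof (intro equalityI subsetI)
  fix m assume m: "m \<in> {m \<in> C. lex_less m (sorted_lex C ! c)}"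
  then have "m \<in> set (sorted_lex C)" using sorted_lex(2)[OF C] by auto
  then obtain k where k: "k < length (sorted_lex C)" "m = sorted_lex C ! k" by (auto simp: in_set_conv_nth)
  then have "k < c" using m sorted_lex_nth[OF C k(1) c] by auto
  then show "m \<in> (\<lambda>k. sorted_lex C ! k) ` {0..<c}" using k by auto
next
  fix m assume "m \<in> (\<lambda>k. sorted_lex C ! k) ` {0..<c}"
  then obtain k where k: "k < c" "m = sorted_lex C ! k" by auto
  then have "m \<in> set (sorted_lex C)" using c by auto
  then show "m \<in> {m \<in> C. lex_less m (sorted_lex C ! c)}"
    using k sorted_lex(2)[OF C] sorted_lex_nth[OF C _ c, of k] c by auto
qed

lemma dep_Mmat:
  fixes u :: "nat \<Rightarrow> mono \<Rightarrow> 'a::field"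
  assumes C: "finite C" and c: "c < length (sorted_lex C)"
  shows "dep (Mmat t u C) c \<longleftrightarrow>
     VR t u C (sorted_lex C ! c) \<in> fm.span ((\<lambda>k. VR t u C (sorted_lex C ! k)) ` {0..<c})"
proof -
  define cs where "cs = sorted_lex C"
  define rs where "rs = row_list t C"
  define M where "M = Mmat t u C"
  have M: "M \<in> carrier_mat (length rs) (length cs)" unfolding M_def rs_def cs_def by (rule Mmat_carrier)
  have ent: "M $$ (r,k) = u (fst (rs ! r)) (mmul (cs ! k) (snd (rs ! r)))" if "r < length rs" "k < length cs" for r k
    using Mmat_entry that unfolding M_def rs_def cs_def by blast
  have rsset: "set rs = {1..t} \<times> C" unfolding rs_def using row_list[OF C] by auto
  have cc: "c < length cs" using c unfolding cs_def .
  show ?thesis unfolding cs_def[symmetric] M_def[symmetric]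
  proof
    assume "dep M c"
    then obtain x where x: "x \<in> carrier_vec (length cs)" "M *\<^sub>v x = 0\<^sub>v (length rs)" "x $ c = 1"
        "\<forall>k. c < k \<and> k < length cs \<longrightarrow> x $ k = 0"
      unfolding dep_def using M by auto
    have "VR t u C (cs ! c) = (\<Sum>k\<in>{0..<c}. scl (- x $ k) (VR t u C (cs ! k)))"
    proof (rule ext)
      fix p :: "nat \<times> mono"
      obtain i b' where p: "p = (i,b')" by (cases p)
      show "VR t u C (cs ! c) p = (\<Sum>k\<in>{0..<c}. scl (- x $ k) (VR t u C (cs ! k))) p"
      proof (cases "i \<in> {1..t} \<and> b' \<in> C")
        case True
        then have "(i,b') \<in> set rs" using rsset by auto
        then obtain r where r: "r < length rs" "rs ! r = (i,b')" by (auto simp: in_set_conv_nth)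
        have "0 = (M *\<^sub>v x) $ r" using x(2) r by simp
        also have "\<dots> = (\<Sum>k\<in>{0..<length cs}. M $$ (r,k) * x $ k)" by (rule mult_mat_vec_row[OF M x(1) r(1)])
        also have "\<dots> = M $$ (r,c) + (\<Sum>k\<in>{0..<c}. M $$ (r,k) * x $ k)"
          by (rule sum_split_at[OF cc]) (use x in auto)
        finally have z: "M $$ (r,c) = - (\<Sum>k\<in>{0..<c}. M $$ (r,k) * x $ k)" by (simp add: eq_neg_iff_add_eq_0)
        have "(\<Sum>k\<in>{0..<c}. scl (- x $ k) (VR t u C (cs ! k))) p = (\<Sum>k\<in>{0..<c}. - x $ k * M $$ (r,k))"
          unfolding sum_fun_apply using r cc True by (intro sum.cong) (auto simp: scl_def VR_def p ent)
        also have "\<dots> = M $$ (r,c)" unfolding z by (simp add: sum_negf mult.commute)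
        also have "\<dots> = VR t u C (cs ! c) p" using r cc True by (simp add: VR_def p ent)
        finally show ?thesis by simp
      next
        case False
        then have z: "VR t u C m p = 0" for m unfolding p VR_def by auto
        show ?thesis unfolding sum_fun_apply by (simp add: z scl_def)
      qed
    qed
    then show "VR t u C (cs ! c) \<in> fm.span ((\<lambda>k. VR t u C (cs ! k)) ` {0..<c})"
      using span_from_coeffs[of "\<lambda>k. - x $ k" "\<lambda>k. VR t u C (cs ! k)" "{0..<c}"] by simp
  next
    assume "VR t u C (cs ! c) \<in> fm.span ((\<lambda>k. VR t u C (cs ! k)) ` {0..<c})"
    then obtain e where e: "VR t u C (cs ! c) = (\<Sum>k\<in>{0..<c}. scl (e k) (VR t u C (cs ! k)))"
      using span_coeffs[of "{0..<c}"] by blast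
    define x where "x = vec (length cs) (\<lambda>k. if k = c then 1 else if k < c then - e k else (0::'a))"
    have xc: "x \<in> carrier_vec (length cs)" unfolding x_def by simp
    have row: "(\<Sum>k\<in>{0..<length cs}. M $$ (r,k) * x $ k) = 0" if r: "r < length rs" for r
    proof -
      obtain i b' where ib: "rs ! r = (i,b')" by (cases "rs ! r")
      have "(i,b') \<in> set rs" using ib r by (metis nth_mem)
      then have ib2: "i \<in> {1..t}" "b' \<in> C" using rsset by auto
      have "(\<Sum>k\<in>{0..<length cs}. M $$ (r,k) * x $ k) = M $$ (r,c) + (\<Sum>k\<in>{0..<c}. M $$ (r,k) * x $ k)"
        by (rule sum_split_at[OF cc]) (auto simp: x_def cc)
      also have "(\<Sum>k\<in>{0..<c}. M $$ (r,k) * x $ k) = - (\<Sum>k\<in>{0..<c}. e k * u i (mmul (cs ! k) b'))"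
        unfolding sum_negf[symmetric] using cc r ib by (intro sum.cong) (auto simp: x_def ent)
      also have "(\<Sum>k\<in>{0..<c}. e k * u i (mmul (cs ! k) b')) = VR t u C (cs ! c) (i,b')"
        unfolding e sum_fun_apply using ib2 by (intro sum.cong) (auto simp: scl_def VR_def)
      also have "VR t u C (cs ! c) (i,b') = M $$ (r,c)" using ib2 ib r cc by (simp add: VR_def ent)
      finally show ?thesis by simp
    qed
    have "M *\<^sub>v x = 0\<^sub>v (length rs)"
      using row mult_mat_vec_row[OF M xc] M by (intro eq_vecI) auto
    moreover have "x $ c = 1" unfolding x_def using cc by simp
    moreover have "\<forall>k. c < k \<and> k < length cs \<longrightarrow> x $ k = 0" unfolding x_def by auto
    ultimately show "dep M c" unfolding dep_def using M xc by auto
  qed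
qed

lemma Bprime_char:
  fixes u :: "nat \<Rightarrow> mono \<Rightarrow> 'a::field"
  assumes C: "finite (Cset j B Bp)"
  shows "Bprime t B j u Bp = {b \<in> Cset j B Bp. VR t u (Cset j B Bp) b \<notin>
            fm.span (VR t u (Cset j B Bp) ` {m \<in> Cset j B Bp. lex_less m b})}"
proof -
  define C where "C = Cset j B Bp"
  define cs where "cs = sorted_lex C"
  have Cf: "finite C" using C unfolding C_def .
  have G: "gauss_jordan_single (Mmat t u C) \<in> carrier_mat (length (row_list t C)) (length cs)"
    using gauss_jordan_single(2)[OF Mmat_carrier refl] unfolding cs_def .
  have pc: "pivot_cols (gauss_jordan_single (Mmat t u C)) = {c. c < length cs \<and>
      VR t u C (cs ! c) \<notin> fm.span (VR t u C ` {m \<in> C. lex_less m (cs ! c)})}"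
  proof (intro equalityI subsetI)
    fix c assume h: "c \<in> pivot_cols (gauss_jordan_single (Mmat t u C))"
    then have cl: "c < length cs" using G unfolding pivot_cols_def by auto
    have "\<not> dep (Mmat t u C) c" using pivot_char[OF Mmat_carrier[of t u C] cl[unfolded cs_def]] h by auto
    then show "c \<in> {c. c < length cs \<and> VR t u C (cs ! c) \<notin> fm.span (VR t u C ` {m \<in> C. lex_less m (cs ! c)})}"
      using dep_Mmat[OF Cf, of c t u] cl lower_set[OF Cf, of c] unfolding cs_def by (simp add: image_image)
  next
    fix c assume "c \<in> {c. c < length cs \<and> VR t u C (cs ! c) \<notin> fm.span (VR t u C ` {m \<in> C. lex_less m (cs ! c)})}"
    then have cl: "c < length cs" and h: "VR t u C (cs ! c) \<notin> fm.span (VR t u C ` {m \<in> C. lex_less m (cs ! c)})" by auto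
    have "\<not> dep (Mmat t u C) c"
      using dep_Mmat[OF Cf, of c t u] cl lower_set[OF Cf, of c] h unfolding cs_def by (simp add: image_image)
    then show "c \<in> pivot_cols (gauss_jordan_single (Mmat t u C))"
      using pivot_char[OF Mmat_carrier[of t u C] cl[unfolded cs_def]] by auto
  qed
  have "Bprime t B j u Bp = (\<lambda>c. cs ! c) ` pivot_cols (gauss_jordan_single (Mmat t u C))"
    unfolding Bprime_def Let_def C_def cs_def ..
  also have "\<dots> = {b \<in> C. VR t u C b \<notin> fm.span (VR t u C ` {m \<in> C. lex_less m b})}"
  proof (intro equalityI subsetI)
    fix b assume "b \<in> (\<lambda>c. cs ! c) ` pivot_cols (gauss_jordan_single (Mmat t u C))"
    then obtain c where "b = cs ! c" "c < length cs" "VR t u C (cs ! c) \<notin> fm.span (VR t u C ` {m \<in> C. lex_less m (cs ! c)})"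
      unfolding pc by auto
    then show "b \<in> {b \<in> C. VR t u C b \<notin> fm.span (VR t u C ` {m \<in> C. lex_less m b})}"
      using sorted_lex(2)[OF Cf] unfolding cs_def by auto
  next
    fix b assume h: "b \<in> {b \<in> C. VR t u C b \<notin> fm.span (VR t u C ` {m \<in> C. lex_less m b})}"
    then have "b \<in> set cs" using sorted_lex(2)[OF Cf] unfolding cs_def by auto
    then obtain c where "c < length cs" "b = cs ! c" by (auto simp: in_set_conv_nth)
    then show "b \<in> (\<lambda>c. cs ! c) ` pivot_cols (gauss_jordan_single (Mmat t u C))"
      unfolding pc using h by auto
  qed
  finally show ?thesis unfolding C_def .
qed


lemma Jj_polys: "g \<in> Jj n t u j \<Longrightarrow> g \<in> polys {j..n}"
  unfolding Jj_def ann_def by auto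

lemma ex_lex_max: "finite N \<Longrightarrow> N \<noteq> {} \<Longrightarrow> \<exists>b0\<in>N. \<forall>b\<in>N. b \<noteq> b0 \<longrightarrow> lex_less b b0"
proof (induction rule: finite_ne_induct)
  case (singleton x) then show ?case by auto
next
  case (insert x F)
  then obtain b0 where b0: "b0 \<in> F" "\<forall>b\<in>F. b \<noteq> b0 \<longrightarrow> lex_less b b0" by auto
  have "x \<noteq> b0" using insert(3) b0(1) by auto
  then consider "lex_less x b0" | "lex_less b0 x" using lex_total by blast
  then show ?case
  proof cases
    case 1 then show ?thesis using b0 by auto
  next
    case 2
    have "\<forall>b\<in>insert x F. b \<noteq> x \<longrightarrow> lex_less b x"
    proof (intro ballI impI)
      fix b assume b: "b \<in> insert x F" "b \<noteq> x"
      then have bF: "b \<in> F" by auto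
      show "lex_less b x"
      proof (cases "b = b0")
        case True then show ?thesis using 2 by simp
      next
        case False then have "lex_less b b0" using b0(2) bF by blast
        then show ?thesis using lex_trans[OF _ 2] by blast
      qed
    qed
    then show ?thesis by blast
  qed
qed

lemma span_subset_span: "A \<subseteq> fm.span B \<Longrightarrow> fm.span A \<subseteq> fm.span B"
proof -
  assume "A \<subseteq> fm.span B"
  then have "fm.span A \<subseteq> fm.span (fm.span B)" by (rule fm.span_mono)
  then show ?thesis by (simp only: fm.span_span)
qed

context
  fixes n t j :: nat and u :: "nat \<Rightarrow> mono \<Rightarrow> 'a::field"
  assumes j: "j \<in> {1..n}"
begin

abbreviation "W \<equiv> monoms {j..n}"
abbreviation "JJ \<equiv> Jj n t u j"
abbreviation "SS \<equiv> std_monos {j..n} (Jj n t u j)"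
abbreviation "VW \<equiv> VR t u (monoms {j..n})"

lemma VW_rel:
  assumes g: "g \<in> JJ"
  shows "(\<Sum>k\<in>supp g. scl (g k) (VW k)) = 0"
proof (rule ext)
  fix p :: "nat \<times> mono"
  obtain i b' where p: "p = (i,b')" by (cases p)
  have gp: "g \<in> polys {j..n}" using Jj_polys[OF g] .
  show "(\<Sum>k\<in>supp g. scl (g k) (VW k)) p = 0 p"
  proof (cases "i \<in> {1..t} \<and> b' \<in> W")
    case True
    then have "(\<Sum>k\<in>supp g. g k * u i (mmul b' k)) = 0" using g Jj_iff[OF gp] by blast
    then show ?thesis unfolding sum_fun_apply using True by (simp add: scl_def VR_def p mmul_comm)
  next
    case False
    then have z: "VW m p = 0" for m unfolding p VR_def by auto
    show ?thesis unfolding sum_fun_apply by (simp add: z scl_def)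
  qed
qed

lemma A_step:
  assumes m: "m \<in> W" "m \<notin> SS"
    and IH: "\<forall>k\<in>W. lex_less k m \<longrightarrow> VW k \<in> fm.span (VW ` {s\<in>SS. s = k \<or> lex_less s k})"
  shows "VW m \<in> fm.span (VW ` {s\<in>SS. lex_less s m})"
proof -
  obtain g where g: "g \<in> JJ" "is_lm g m" using m unfolding std_monos_def by auto
  have gp: "g \<in> polys {j..n}" using Jj_polys[OF g(1)] .
  have fin: "finite (supp g)" using gp unfolding polys_def by auto
  have mg: "m \<in> supp g" "g m \<noteq> 0" using g(2) unfolding is_lm_def by auto
  have "VW m \<in> fm.span (VW ` (supp g - {m}))"
    by (rule dep_span[OF fin mg VW_rel[OF g(1)]])
  moreover have "VW ` (supp g - {m}) \<subseteq> fm.span (VW ` {s\<in>SS. lex_less s m})"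
  proof
    fix v assume "v \<in> VW ` (supp g - {m})"
    then obtain k where k: "k \<in> supp g" "k \<noteq> m" "v = VW k" by auto
    have kl: "lex_less k m" using g(2) k unfolding is_lm_def by auto
    have kW: "k \<in> W" using polys_supp[OF gp] k by auto
    have "VW k \<in> fm.span (VW ` {s\<in>SS. s = k \<or> lex_less s k})" using IH kW kl by blast
    also have "\<dots> \<subseteq> fm.span (VW ` {s\<in>SS. lex_less s m})"
    proof (intro fm.span_mono image_mono subsetI)
      fix s assume "s \<in> {s\<in>SS. s = k \<or> lex_less s k}"
      then have s: "s \<in> SS" "s = k \<or> lex_less s k" by auto
      have "lex_less s m"
      proof (cases "s = k")
        case True then show ?thesis using kl by simp
      next
        case False then have "lex_less s k" using s(2) by simp
        then show ?thesis using lex_trans[OF _ kl] by blast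
      qed
      then show "s \<in> {s\<in>SS. lex_less s m}" using s(1) by simp
    qed
    finally show "v \<in> fm.span (VW ` {s\<in>SS. lex_less s m})" using k by simp
  qed
  ultimately show ?thesis using span_subset_span by blast
qed

lemma A_full: "m \<in> W \<Longrightarrow> VW m \<in> fm.span (VW ` {s\<in>SS. s = m \<or> lex_less s m})"
proof (induction m rule: wf_induct[OF wf_lex_mon[of n]])
  case (1 m)
  show ?case
  proof (cases "m \<in> SS")
    case True
    then have "m \<in> {s\<in>SS. s = m \<or> lex_less s m}" by simp
    then have "VW m \<in> VW ` {s\<in>SS. s = m \<or> lex_less s m}" by (rule imageI)
    then show ?thesis by (rule fm.span_base)
  next
    case False
    have mN: "m \<in> monoms {..n}" using 1(2) monoms_mono[of "{j..n}" "{..n}"] by auto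
    have IH: "\<forall>k\<in>W. lex_less k m \<longrightarrow> VW k \<in> fm.span (VW ` {s\<in>SS. s = k \<or> lex_less s k})"
    proof (intro ballI impI)
      fix k assume k: "k \<in> W" "lex_less k m"
      then have "(k, m) \<in> {(a,b). lex_less a b \<and> b \<in> monoms {..n}}" using mN by simp
      then show "VW k \<in> fm.span (VW ` {s\<in>SS. s = k \<or> lex_less s k})" using 1(1) k(1) by blast
    qed
    have "VW m \<in> fm.span (VW ` {s\<in>SS. lex_less s m})" by (rule A_step[OF 1(2) False IH])
    also have "\<dots> \<subseteq> fm.span (VW ` {s\<in>SS. s = m \<or> lex_less s m})" by (intro fm.span_mono image_mono) auto
    finally show ?thesis .
  qed
qed

lemma A_strict: "m \<in> W \<Longrightarrow> m \<notin> SS \<Longrightarrow> VW m \<in> fm.span (VW ` {s\<in>SS. lex_less s m})"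
  using A_step A_full by blast

end


lemma var_mono_add: "mmul (var_mono j a) (var_mono j b) = var_mono j (a + b)"
  unfolding mmul_def var_mono_def by auto

lemma var_mono_monoms: "j \<in> V \<Longrightarrow> var_mono j k \<in> monoms V"
  unfolding var_mono_def monoms_def by auto

lemma is_lm_poly_in_var:
  assumes "lead_coeff p = (1::'a::field)"
  shows "is_lm (poly_in_var j p) (var_mono j (degree p))"
  unfolding is_lm_def
proof (intro conjI allI impI)
  show "poly_in_var j p (var_mono j (degree p)) \<noteq> 0"
    using assms unfolding poly_in_var_def by (simp add: var_mono_def)
  fix m assume h: "poly_in_var j p m \<noteq> 0 \<and> m \<noteq> var_mono j (degree p)"
  then have m: "m = var_mono j (m j)" "coeff p (m j) \<noteq> 0" unfolding poly_in_var_def by (auto split: if_splits)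
  have "m j \<le> degree p" using m(2) le_degree by blast
  moreover have "m j \<noteq> degree p" using h m(1) by metis
  ultimately have lt: "m j < degree p" by simp
  have "\<forall>i<j. m i = var_mono j (degree p) i"
  proof (intro allI impI)
    fix i assume "i < j"
    then show "m i = var_mono j (degree p) i" using fun_cong[OF m(1), of i] by (simp add: var_mono_def)
  qed
  moreover have "m j < var_mono j (degree p) j" using lt by (simp add: var_mono_def)
  ultimately show "lex_less m (var_mono j (degree p))" unfolding lex_less_def by blast
qed

lemma Cset_finite: "finite Bp \<Longrightarrow> finite (Cset j B Bp)"
proof -
  assume f: "finite Bp"
  have "Cset j B Bp = (\<lambda>(b',k). mmul b' (var_mono j k)) ` (Bp \<times> {..<B})"
    unfolding Cset_def by auto
  then show ?thesis using f by simp
qed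

lemma Cset_W:
  assumes "Bp \<subseteq> monoms {j+1..n}" "j \<le> n"
  shows "Cset j B Bp \<subseteq> monoms {j..n}"
proof
  fix b assume "b \<in> Cset j B Bp"
  then obtain b' k where b: "b = mmul b' (var_mono j k)" "b' \<in> Bp" unfolding Cset_def by auto
  have "b' \<in> monoms {j..n}" using b(2) assms(1) monoms_mono[of "{j+1..n}" "{j..n}"] by auto
  moreover have "var_mono j k \<in> monoms {j..n}" using assms(2) by (intro var_mono_monoms) auto
  ultimately show "b \<in> monoms {j..n}" using b(1) mmul_monoms by blast
qed

lemma VR_rel:
  assumes g: "g \<in> Jj n t u j" and C: "C \<subseteq> monoms {j..n}"
  shows "(\<Sum>k\<in>supp g. scl (g k) (VR t u C k)) = 0"
proof (rule ext)
  fix p :: "nat \<times> mono"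
  obtain i b' where p: "p = (i,b')" by (cases p)
  have gp: "g \<in> polys {j..n}" using Jj_polys[OF g] .
  show "(\<Sum>k\<in>supp g. scl (g k) (VR t u C k)) p = 0 p"
  proof (cases "i \<in> {1..t} \<and> b' \<in> C")
    case True
    then have "(\<Sum>k\<in>supp g. g k * u i (mmul b' k)) = 0" using g Jj_iff[OF gp] C by blast
    then show ?thesis unfolding sum_fun_apply using True by (simp add: scl_def VR_def p mmul_comm)
  next
    case False
    then have z: "VR t u C m p = 0" for m unfolding p VR_def by auto
    show ?thesis unfolding sum_fun_apply by (simp add: z scl_def)
  qed
qed

lemma VR_transfer:
  assumes L: "finite L" and C: "C \<subseteq> Wv"
    and v: "VR t u Wv m \<in> fm.span (VR t u Wv ` L)"
  shows "VR t u C m \<in> fm.span (VR t u C ` L)"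
proof -
  obtain e where e: "VR t u Wv m = (\<Sum>s\<in>L. scl (e s) (VR t u Wv s))" using span_coeffs[OF L v] by blast
  have "VR t u C m = (\<Sum>s\<in>L. scl (e s) (VR t u C s))"
  proof (rule ext)
    fix p :: "nat \<times> mono"
    obtain i b' where p: "p = (i,b')" by (cases p)
    show "VR t u C m p = (\<Sum>s\<in>L. scl (e s) (VR t u C s)) p"
    proof (cases "i \<in> {1..t} \<and> b' \<in> C")
      case True
      then have "b' \<in> Wv" using C by auto
      then have "VR t u Wv m p = (\<Sum>s\<in>L. scl (e s) (VR t u Wv s)) p" using e by simp
      then show ?thesis using True \<open>b' \<in> Wv\<close> unfolding sum_fun_apply by (simp add: scl_def VR_def p)
    next
      case False
      then have z: "VR t u C x p = 0" for x unfolding p VR_def by auto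
      show ?thesis unfolding sum_fun_apply by (simp add: z scl_def)
    qed
  qed
  then show ?thesis using span_from_coeffs by metis
qed

lemma lincomb_polys:
  assumes "finite S" "S \<subseteq> polys V"
  shows "lincomb S c \<in> polys V"
proof -
  have sub: "supp (lincomb S c) \<subseteq> (\<Union>s\<in>S. supp s)"
  proof
    fix m assume "m \<in> supp (lincomb S c)"
    then have "(\<Sum>s\<in>S. c s * s m) \<noteq> 0" unfolding lincomb_def by simp
    then obtain s where "s \<in> S" "c s * s m \<noteq> 0" by (meson sum.neutral)
    then show "m \<in> (\<Union>s\<in>S. supp s)" by (metis (mono_tags, lifting) UN_I mem_Collect_eq mult_zero_right)
  qed
  have "finite (\<Union>s\<in>S. supp s)" using assms unfolding polys_def by auto
  then have "finite (supp (lincomb S c))" using sub finite_subset by blast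
  moreover have "\<forall>m. lincomb S c m \<noteq> 0 \<longrightarrow> m \<in> monoms V" using sub assms(2) unfolding polys_def by blast
  ultimately show ?thesis unfolding polys_def by blast
qed

lemma indep_sub:
  assumes j: "j \<in> {1..n}"
  shows "indep_cards {j..n} (Jj n t u j) \<subseteq> indep_cards {1..n} (ann {1..n} (u ` {1..t}))"
proof
  fix x assume "x \<in> indep_cards {j..n} (Jj n t u j)"
  then obtain S where S: "x = card S" "finite S" "S \<subseteq> polys {j..n}" "lin_indep_mod (Jj n t u j) S"
    unfolding indep_cards_def by auto
  have "S \<subseteq> polys {1..n}" using S(3) polys_mono[of "{j..n}" "{1..n}"] j by auto
  moreover have "lin_indep_mod (ann {1..n} (u ` {1..t})) S"
    unfolding lin_indep_mod_def
  proof (intro allI impI)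
    fix c assume "lincomb S c \<in> ann {1..n} (u ` {1..t})"
    then have "lincomb S c \<in> Jj n t u j" using J_sub_Jj[OF j] lincomb_polys[OF S(2,3)] by blast
    then show "\<forall>s\<in>S. c s = 0" using S(4) unfolding lin_indep_mod_def by blast
  qed
  ultimately show "x \<in> indep_cards {1..n} (ann {1..n} (u ` {1..t}))" unfolding indep_cards_def using S by blast
qed


lemma part1:
  fixes u :: "nat \<Rightarrow> mono \<Rightarrow> 'a::field"
  assumes zerodim: "zero_dimensional {1..n} (ann {1..n} (u ` {1..t}))"
    and j: "j \<in> {1..n}"
    and Bp_fin: "finite Bp"
    and Bp_monos: "Bp \<subseteq> monoms {j+1..n}"
  shows "card (Bprime t B j u Bp) \<le> quot_dim {j..n} (Jj n t u j)"
proof -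
  define C where "C = Cset j B Bp"
  define P where "P = Bprime t B j u Bp"
  have Cf: "finite C" unfolding C_def using Cset_finite[OF Bp_fin] .
  have CW: "C \<subseteq> monoms {j..n}" unfolding C_def using Cset_W[OF Bp_monos] j by auto
  have Pchar: "P = {b \<in> C. VR t u C b \<notin> fm.span (VR t u C ` {m \<in> C. lex_less m b})}"
    unfolding P_def C_def by (rule Bprime_char[OF Cf[unfolded C_def]])
  have PC: "P \<subseteq> C" using Pchar by auto
  have Pf: "finite P" using finite_subset[OF PC Cf] .
  define dl where "dl b = (\<lambda>m::mono. if m = b then (1::'a) else 0)" for b
  have inj: "inj_on dl P" unfolding inj_on_def dl_def by (metis one_neq_zero)
  define SS where "SS = dl ` P"
  have card: "card SS = card P" unfolding SS_def using card_image[OF inj] .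
  have SSf: "finite SS" unfolding SS_def using Pf by simp
  have SSp: "SS \<subseteq> polys {j..n}"
  proof
    fix s assume "s \<in> SS"
    then obtain b where b: "b \<in> P" "s = dl b" unfolding SS_def by auto
    have "supp s = {b}" using b(2) unfolding dl_def by auto
    moreover have "b \<in> monoms {j..n}" using b(1) PC CW by auto
    ultimately show "s \<in> polys {j..n}" unfolding polys_def by auto
  qed
  have indep: "lin_indep_mod (Jj n t u j) SS"
    unfolding lin_indep_mod_def
  proof (intro allI impI)
    fix c assume fJ: "lincomb SS c \<in> Jj n t u j"
    define f where "f = lincomb SS c"
    have fval: "f m = (if m \<in> P then c (dl m) else 0)" for m
    proof -
      have "f m = (\<Sum>s\<in>dl ` P. c s * s m)" unfolding f_def lincomb_def SS_def ..
      also have "\<dots> = (\<Sum>b\<in>P. c (dl b) * dl b m)" by (rule sum.reindex[OF inj, unfolded comp_def])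
      also have "\<dots> = (\<Sum>b\<in>P. if m = b then c (dl b) else 0)" by (intro sum.cong) (auto simp: dl_def)
      also have "\<dots> = (if m \<in> P then c (dl m) else 0)" using Pf by (simp add: sum.delta)
      finally show ?thesis .
    qed
    show "\<forall>s\<in>SS. c s = 0"
    proof (rule ccontr)
      assume "\<not> (\<forall>s\<in>SS. c s = 0)"
      then obtain b where b: "b \<in> P" "c (dl b) \<noteq> 0" unfolding SS_def by auto
      have fJ': "f \<in> Jj n t u j" using fJ unfolding f_def .
      have suppP: "supp f \<subseteq> P" using fval by (auto split: if_splits)
      have sf: "finite (supp f)" using finite_subset[OF suppP Pf] .
      have "b \<in> supp f" using fval b by simp
      then obtain b0 where b0: "b0 \<in> supp f" "\<forall>b\<in>supp f. b \<noteq> b0 \<longrightarrow> lex_less b b0"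
        using ex_lex_max[OF sf] by blast
      have "f b0 \<noteq> 0" using b0(1) by simp
      then have "VR t u C b0 \<in> fm.span (VR t u C ` (supp f - {b0}))"
        using dep_span[OF sf b0(1), of f "VR t u C"] VR_rel[OF fJ' CW] by simp
      also have "\<dots> \<subseteq> fm.span (VR t u C ` {m \<in> C. lex_less m b0})"
        using b0(2) suppP PC by (intro fm.span_mono image_mono) auto
      finally have "VR t u C b0 \<in> fm.span (VR t u C ` {m \<in> C. lex_less m b0})" .
      moreover have "b0 \<in> P" using b0(1) suppP by auto
      ultimately show False using Pchar by auto
    qed
  qed
  have mem: "card SS \<in> indep_cards {j..n} (Jj n t u j)"
    unfolding indep_cards_def using SSf SSp indep by blast
  have bdd: "bdd_above (indep_cards {j..n} (Jj n t u j))"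
    using zerodim indep_sub[OF j] unfolding zero_dimensional_def by (rule bdd_above_mono)
  have "card SS \<le> quot_dim {j..n} (Jj n t u j)" unfolding quot_dim_def using mem bdd by (rule cSup_upper)
  then show ?thesis using card unfolding P_def by simp
qed


lemma stdC:
  fixes u :: "nat \<Rightarrow> mono \<Rightarrow> 'a::field"
  assumes minpoly: "\<forall>k\<in>{1..n}. \<exists>p. is_min_poly (ann {1..n} (u ` {1..t})) k p \<and> degree p \<le> B"
    and j: "j \<in> {1..n}"
    and H1: "Bp = std_monos {j+1..n} (Jj n t u (j+1))"
    and H2: "Jj n t u j \<inter> polys {j+1..n} = Jj n t u (j+1)"
    and b: "b \<in> std_monos {j..n} (Jj n t u j)"
  shows "b \<in> Cset j B Bp"
proof -
  have bW: "b \<in> monoms {j..n}" and bS: "\<not> (\<exists>f\<in>Jj n t u j. is_lm f b)" using b unfolding std_monos_def by auto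
  define b' where "b' = (\<lambda>i. if i = j then 0 else b i)"
  define k where "k = b j"
  have bdec: "b = mmul b' (var_mono j k)" unfolding b'_def k_def mmul_def var_mono_def by auto
  have b'm: "b' \<in> monoms {j+1..n}" unfolding monoms_def
  proof (intro CollectI allI impI)
    fix i assume "b' i \<noteq> 0"
    then have "i \<noteq> j" "b i \<noteq> 0" unfolding b'_def by (auto split: if_splits)
    moreover have "b i \<noteq> 0 \<Longrightarrow> i \<in> {j..n}" using bW unfolding monoms_def by blast
    ultimately show "i \<in> {j+1..n}" by auto
  qed
  have jW: "j \<in> {j..n}" using j by auto
  have b'B: "b' \<in> Bp"
  proof -
    have "\<not> (\<exists>g\<in>Jj n t u (j+1). is_lm g b')"
    proof
      assume "\<exists>g\<in>Jj n t u (j+1). is_lm g b'"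
      then obtain g where g: "g \<in> Jj n t u (j+1)" "is_lm g b'" by auto
      have gJ: "g \<in> Jj n t u j" using g(1) H2 by auto
      have "mtimes (var_mono j k) g \<in> Jj n t u j"
        using ann_mtimes[OF gJ[unfolded Jj_def] var_mono_monoms[OF jW]] unfolding Jj_def .
      moreover have "mmul (var_mono j k) b' = b" using bdec mmul_comm[of b' "var_mono j k"] by simp
      then have "is_lm (mtimes (var_mono j k) g) b"
        using is_lm_mtimes[OF g(2), of "var_mono j k"] by simp
      ultimately show False using bS by blast
    qed
    then show ?thesis unfolding H1 std_monos_def using b'm by blast
  qed
  have kB: "k < B"
  proof (rule ccontr)
    assume "\<not> k < B"
    then have kB: "B \<le> k" by simp
    obtain p where p: "is_min_poly (ann {1..n} (u ` {1..t})) j p" "degree p \<le> B" using minpoly j by blast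
    define q where "q = poly_in_var j p"
    define d where "d = degree p"
    have qJ: "q \<in> ann {1..n} (u ` {1..t})" using p(1) unfolding is_min_poly_def q_def by auto
    have qp1: "q \<in> polys {1..n}" using qJ unfolding ann_def by auto
    have qp: "q \<in> polys {j..n}"
    proof -
      have "m \<in> monoms {j..n}" if "q m \<noteq> 0" for m
      proof -
        have "m = var_mono j (m j)" using that unfolding q_def poly_in_var_def by (auto split: if_splits)
        then show ?thesis using var_mono_monoms[OF jW, of "m j"] by simp
      qed
      then show ?thesis using qp1 unfolding polys_def by auto
    qed
    have qJj: "q \<in> Jj n t u j" using J_sub_Jj[OF j qJ qp] .
    have lm: "is_lm q (var_mono j d)" unfolding q_def d_def
      by (rule is_lm_poly_in_var) (use p(1) in \<open>simp add: is_min_poly_def\<close>)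
    define mm where "mm = mmul b' (var_mono j (k - d))"
    have mmW: "mm \<in> monoms {j..n}" unfolding mm_def
    proof (rule mmul_monoms)
      show "b' \<in> monoms {j..n}" using b'm monoms_mono[of "{j+1..n}" "{j..n}"] by auto
      show "var_mono j (k - d) \<in> monoms {j..n}" by (rule var_mono_monoms[OF jW])
    qed
    have "mtimes mm q \<in> Jj n t u j"
      using ann_mtimes[OF qJj[unfolded Jj_def] mmW] unfolding Jj_def .
    moreover have "mmul mm (var_mono j d) = b"
      unfolding mm_def mmul_assoc var_mono_add using kB p(2) bdec unfolding d_def by simp
    then have "is_lm (mtimes mm q) b" using is_lm_mtimes[OF lm, of mm] by simp
    ultimately show False using bS by blast
  qed
  show ?thesis unfolding Cset_def using bdec b'B kB by blast
qed


lemma part2: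
  fixes u :: "nat \<Rightarrow> mono \<Rightarrow> 'a::field"
  assumes minpoly: "\<forall>k\<in>{1..n}. \<exists>p. is_min_poly (ann {1..n} (u ` {1..t})) k p \<and> degree p \<le> B"
    and j: "j \<in> {1..n}"
    and Bp_fin: "finite Bp"
    and Bp_monos: "Bp \<subseteq> monoms {j+1..n}"
    and H1: "Bp = std_monos {j+1..n} (Jj n t u (j+1))"
    and H2: "Jj n t u j \<inter> polys {j+1..n} = Jj n t u (j+1)"
  shows "Bprime t B j u Bp = std_monos {j..n} (Jj n t u j)"
proof -
  define C where "C = Cset j B Bp"
  define P where "P = Bprime t B j u Bp"
  define S where "S = std_monos {j..n} (Jj n t u j)"
  have Cf: "finite C" unfolding C_def using Cset_finite[OF Bp_fin] .
  have CW: "C \<subseteq> monoms {j..n}" unfolding C_def using Cset_W[OF Bp_monos] j by auto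
  have Pchar: "P = {b \<in> C. VR t u C b \<notin> fm.span (VR t u C ` {m \<in> C. lex_less m b})}"
    unfolding P_def C_def by (rule Bprime_char[OF Cf[unfolded C_def]])
  have SC: "S \<subseteq> C" unfolding S_def C_def using stdC[OF minpoly j H1 H2] by blast
  have Sf: "finite S" using finite_subset[OF SC Cf] .
  have "P = S"
  proof (intro equalityI subsetI)
    fix b assume bP: "b \<in> P"
    then have bC: "b \<in> C" and nsp: "VR t u C b \<notin> fm.span (VR t u C ` {m \<in> C. lex_less m b})"
      using Pchar by auto
    have bW: "b \<in> monoms {j..n}" using bC CW by auto
    show "b \<in> S"
    proof (rule ccontr)
      assume nb: "b \<notin> S"
      define L where "L = {s\<in>S. lex_less s b}"
      have Lf: "finite L" unfolding L_def using Sf by simp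
      have "VR t u (monoms {j..n}) b \<in> fm.span (VR t u (monoms {j..n}) ` L)"
        unfolding L_def using A_strict[OF j bW nb[unfolded S_def]] unfolding S_def .
      then have "VR t u C b \<in> fm.span (VR t u C ` L)" by (rule VR_transfer[OF Lf CW])
      also have "\<dots> \<subseteq> fm.span (VR t u C ` {m \<in> C. lex_less m b})"
        unfolding L_def using SC by (intro fm.span_mono image_mono) auto
      finally show False using nsp by blast
    qed
  next
    fix b assume bS: "b \<in> S"
    have bC: "b \<in> C" using bS SC by auto
    have bW: "b \<in> monoms {j..n}" using bC CW by auto
    have nlm: "\<not> (\<exists>f\<in>Jj n t u j. is_lm f b)" using bS unfolding S_def std_monos_def by auto
    have "VR t u C b \<notin> fm.span (VR t u C ` {m \<in> C. lex_less m b})"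
    proof
      define L2 where "L2 = {m \<in> C. lex_less m b}"
      assume "VR t u C b \<in> fm.span (VR t u C ` {m \<in> C. lex_less m b})"
      then have sp: "VR t u C b \<in> fm.span (VR t u C ` L2)" unfolding L2_def .
      have L2f: "finite L2" unfolding L2_def using Cf by simp
      obtain a where a: "VR t u C b = (\<Sum>c\<in>L2. scl (a c) (VR t u C c))" using span_coeffs[OF L2f sp] by blast
      have bL2: "b \<notin> L2" unfolding L2_def using lex_irrefl by auto
      define f where "f m = (if m = b then 1 else 0) - (if m \<in> L2 then a m else (0::'a))" for m
      have suppf: "supp f \<subseteq> insert b L2" unfolding f_def by auto
      have L2C: "L2 \<subseteq> C" unfolding L2_def by auto
      have fpoly: "f \<in> polys {j..n}"
        unfolding polys_def using finite_subset[OF suppf] L2f suppf L2C CW bW by auto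
      have lmf: "is_lm f b" unfolding is_lm_def
      proof (intro conjI allI impI)
        show "f b \<noteq> 0" using bL2 unfolding f_def by simp
        fix m assume "f m \<noteq> 0 \<and> m \<noteq> b"
        then have "m \<in> L2" unfolding f_def by (auto split: if_splits)
        then show "lex_less m b" unfolding L2_def by auto
      qed
      have fJ: "f \<in> Jj n t u j"
        unfolding Jj_iff[OF fpoly]
      proof (intro ballI)
        fix i m assume i: "i \<in> {1..t}" and mW: "m \<in> monoms {j..n}"
        have "(\<Sum>k\<in>supp f. f k * u i (mmul m k)) = (\<Sum>k\<in>insert b L2. f k * u i (mmul m k))"
          by (rule sum.mono_neutral_left) (use L2f suppf in auto)
        also have "\<dots> = f b * u i (mmul m b) + (\<Sum>k\<in>L2. f k * u i (mmul m k))"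
          using sum.insert[OF L2f bL2] .
        also have "(\<Sum>k\<in>L2. f k * u i (mmul m k)) = - (\<Sum>c\<in>L2. a c * u i (mmul m c))"
          unfolding sum_negf[symmetric] using bL2 by (intro sum.cong) (auto simp: f_def)
        also have "f b = 1" using bL2 unfolding f_def by simp
        finally have s: "(\<Sum>k\<in>supp f. f k * u i (mmul m k)) = u i (mmul m b) - (\<Sum>c\<in>L2. a c * u i (mmul m c))"
          by simp
        have "VR t u (monoms {j..n}) m \<in> fm.span (VR t u (monoms {j..n}) ` {s\<in>S. s = m \<or> lex_less s m})"
          using A_full[OF j mW] unfolding S_def .
        also have "\<dots> \<subseteq> fm.span (VR t u (monoms {j..n}) ` S)" by (intro fm.span_mono image_mono) auto
        finally obtain e where e: "VR t u (monoms {j..n}) m = (\<Sum>s\<in>S. scl (e s) (VR t u (monoms {j..n}) s))"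
          using span_coeffs[OF Sf] by blast
        have evx: "u i (mmul m x) = (\<Sum>s\<in>S. e s * u i (mmul s x))" if x: "x \<in> monoms {j..n}" for x
        proof -
          have "VR t u (monoms {j..n}) m (i,x) = (\<Sum>s\<in>S. scl (e s) (VR t u (monoms {j..n}) s)) (i,x)"
            using e by simp
          then show ?thesis unfolding sum_fun_apply using i x by (simp add: VR_def scl_def)
        qed
        have evb: "u i (mmul b s) = (\<Sum>c\<in>L2. a c * u i (mmul c s))" if s: "s \<in> S" for s
        proof -
          have sC: "s \<in> C" using s SC by auto
          have "VR t u C b (i,s) = (\<Sum>c\<in>L2. scl (a c) (VR t u C c)) (i,s)" using a by simp
          then show ?thesis unfolding sum_fun_apply using i sC by (simp add: VR_def scl_def)
        qed
        have t1: "u i (mmul m b) = (\<Sum>s\<in>S. \<Sum>c\<in>L2. e s * a c * u i (mmul c s))"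
        proof -
          have "u i (mmul m b) = (\<Sum>s\<in>S. e s * u i (mmul s b))" using evx[OF bW] .
          also have "\<dots> = (\<Sum>s\<in>S. e s * (\<Sum>c\<in>L2. a c * u i (mmul c s)))"
            using evb by (intro sum.cong) (auto simp: mmul_comm)
          also have "\<dots> = (\<Sum>s\<in>S. \<Sum>c\<in>L2. e s * a c * u i (mmul c s))"
            by (simp add: sum_distrib_left mult.assoc)
          finally show ?thesis .
        qed
        have t2: "(\<Sum>c\<in>L2. a c * u i (mmul m c)) = (\<Sum>s\<in>S. \<Sum>c\<in>L2. e s * a c * u i (mmul c s))"
        proof -
          have "(\<Sum>c\<in>L2. a c * u i (mmul m c)) = (\<Sum>c\<in>L2. a c * (\<Sum>s\<in>S. e s * u i (mmul s c)))"
            using evx L2C CW by (intro sum.cong) auto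
          also have "\<dots> = (\<Sum>c\<in>L2. \<Sum>s\<in>S. e s * a c * u i (mmul c s))"
            by (simp add: sum_distrib_left mmul_comm ac_simps)
          also have "\<dots> = (\<Sum>s\<in>S. \<Sum>c\<in>L2. e s * a c * u i (mmul c s))" by (rule sum.swap)
          finally show ?thesis .
        qed
        show "(\<Sum>k\<in>supp f. f k * u i (mmul m k)) = 0" unfolding s t1 t2 by simp
      qed
      show False using nlm fJ lmf by blast
    qed
    then show "b \<in> P" using Pchar bC by auto
  qed
  then show ?thesis unfolding P_def S_def .
qed


theorem lemma6:
  fixes n t B j :: nat
    and u :: "nat \<Rightarrow> mono \<Rightarrow> 'a::field"
    and Bp :: "mono set"
  assumes perfect: "perfect_field TYPE('a)"
    and zerodim: "zero_dimensional {1..n} (ann {1..n} (u ` {1..t}))"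
    and minpoly: "\<forall>k\<in>{1..n}. \<exists>p. is_min_poly (ann {1..n} (u ` {1..t})) k p \<and> degree p \<le> B"
    and j: "j \<in> {1..n}"
    and Bp_fin: "finite Bp"
    and Bp_monos: "Bp \<subseteq> monoms {j+1..n}"
    and Bp_card: "j < n \<Longrightarrow> card Bp \<le> quot_dim {j+1..n} (Jj n t u (j+1))"
    and Bp_last: "j = n \<Longrightarrow> Bp = {(\<lambda>_. 0)}"
  shows "card (Bprime t B j u Bp) \<le> quot_dim {j..n} (Jj n t u j)
         \<and> ((j \<le> n - 1 \<and> Bp = std_monos {j+1..n} (Jj n t u (j+1))
              \<and> Jj n t u j \<inter> polys {j+1..n} = Jj n t u (j+1))
             \<longrightarrow> Bprime t B j u Bp = std_monos {j..n} (Jj n t u j))"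
proof -
  have p1: "card (Bprime t B j u Bp) \<le> quot_dim {j..n} (Jj n t u j)"
    by (rule part1[OF zerodim j Bp_fin Bp_monos])
  have p2: "(j \<le> n - 1 \<and> Bp = std_monos {j+1..n} (Jj n t u (j+1))
              \<and> Jj n t u j \<inter> polys {j+1..n} = Jj n t u (j+1))
             \<longrightarrow> Bprime t B j u Bp = std_monos {j..n} (Jj n t u j)"
    using part2[OF minpoly j Bp_fin Bp_monos] by blast
  show ?thesis using p1 p2 by blast
qed

end
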